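(* Let $E\subseteq\omega_1$ be stationary and $T$ an SS Aronszajn tree. Let $\langle x_\alpha:\alpha\in E\rangle$ be a sequence of finite antichains of $T$. Then there is a stationary $E'\subseteq E$ such that $\bigcup_{\alpha\in E'}x_\alpha$ is an antichain of $T$.
   Context: An Aronszajn tree is a tree of height $\omega_1$ all of whose levels and chains are countable. A subset $X\subseteq T$ is stationary if $\{\mathrm{ht}(t):t\in X\}$ is stationary in $\omega_1$. $T$ is SS if every stationary subset of $T$ contains a stationary antichain. *)

theory Defs
  imports Main "HOL-Library.Countable_Set"
begin

text \<open>omega_1 is represented by a well-ordered type 'i that is uncountable
  and all of whose proper initial segments are countable.\<close>
definition is_omega1 :: "'i::wellorder itself \<Rightarrow> bool" where
  "is_omega1 _ \<longleftrightarrow> uncountable (UNIV :: 'i set) \<and> (\<forall>a::'i. countable {b. b < a})"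

definition unbounded :: "'i::wellorder set \<Rightarrow> bool" where
  "unbounded C \<longleftrightarrow> (\<forall>a. \<exists>c\<in>C. a < c)"

definition closed_set :: "'i::wellorder set \<Rightarrow> bool" where
  "closed_set C \<longleftrightarrow> (\<forall>a. (\<exists>c\<in>C. c < a) \<and> (\<forall>b<a. \<exists>c\<in>C. b < c \<and> c < a) \<longrightarrow> a \<in> C)"

definition club :: "'i::wellorder set \<Rightarrow> bool" where
  "club C \<longleftrightarrow> closed_set C \<and> unbounded C"

definition stationary :: "'i::wellorder set \<Rightarrow> bool" where
  "stationary S \<longleftrightarrow> (\<forall>C. club C \<longrightarrow> S \<inter> C \<noteq> {})"

text \<open>A tree (T, lt) with height function ht into 'i: lt is a strict partial
  order on T and, for every t, ht maps the predecessors of t order-isomorphically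
  onto the ordinals below ht t (so ht t is the order type of the predecessors).\<close>
definition tree_with_height :: "'t set \<Rightarrow> ('t \<Rightarrow> 't \<Rightarrow> bool) \<Rightarrow> ('t \<Rightarrow> 'i::wellorder) \<Rightarrow> bool" where
  "tree_with_height T lt ht \<longleftrightarrow>
     (\<forall>t\<in>T. \<not> lt t t) \<and>
     (\<forall>s\<in>T. \<forall>t\<in>T. \<forall>u\<in>T. lt s t \<and> lt t u \<longrightarrow> lt s u) \<and>
     (\<forall>t\<in>T. bij_betw ht {s\<in>T. lt s t} {b. b < ht t} \<and>
        (\<forall>s\<in>T. \<forall>s'\<in>T. lt s t \<and> lt s' t \<longrightarrow> (lt s s' \<longleftrightarrow> ht s < ht s')))"

definition chain_in :: "('t \<Rightarrow> 't \<Rightarrow> bool) \<Rightarrow> 't set \<Rightarrow> bool" where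
  "chain_in lt C \<longleftrightarrow> (\<forall>s\<in>C. \<forall>t\<in>C. s = t \<or> lt s t \<or> lt t s)"

definition antichain_in :: "'t set \<Rightarrow> ('t \<Rightarrow> 't \<Rightarrow> bool) \<Rightarrow> 't set \<Rightarrow> bool" where
  "antichain_in T lt A \<longleftrightarrow> A \<subseteq> T \<and> (\<forall>s\<in>A. \<forall>t\<in>A. s \<noteq> t \<longrightarrow> \<not> lt s t \<and> \<not> lt t s)"

text \<open>Aronszajn tree: height omega_1 (every level nonempty; all heights are
  countable ordinals since ht maps into 'i), countable levels, countable chains.\<close>
definition aronszajn :: "'t set \<Rightarrow> ('t \<Rightarrow> 't \<Rightarrow> bool) \<Rightarrow> ('t \<Rightarrow> 'i::wellorder) \<Rightarrow> bool" where
  "aronszajn T lt ht \<longleftrightarrow> tree_with_height T lt ht \<and>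
     (\<forall>a. \<exists>t\<in>T. ht t = a) \<and>
     (\<forall>a. countable {t\<in>T. ht t = a}) \<and>
     (\<forall>C\<subseteq>T. chain_in lt C \<longrightarrow> countable C)"

definition stationary_in_tree :: "('t \<Rightarrow> 'i::wellorder) \<Rightarrow> 't set \<Rightarrow> bool" where
  "stationary_in_tree ht X \<longleftrightarrow> stationary (ht ` X)"

definition SS_tree :: "'t set \<Rightarrow> ('t \<Rightarrow> 't \<Rightarrow> bool) \<Rightarrow> ('t \<Rightarrow> 'i::wellorder) \<Rightarrow> bool" where
  "SS_tree T lt ht \<longleftrightarrow> (\<forall>X\<subseteq>T. stationary_in_tree ht X \<longrightarrow>
       (\<exists>A\<subseteq>X. antichain_in T lt A \<and> stationary_in_tree ht A))"

end

theory Submission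
  imports Defs
begin


lemma om_bounded:
  assumes om: "is_omega1 TYPE('i::wellorder)" and c: "countable (D::'i set)"
  shows "\<exists>g. \<forall>d\<in>D. d < g"
proof -
  have "countable (\<Union>d\<in>D. {b. b \<le> d})"
  proof (rule countable_UN[OF c])
    fix d assume "d \<in> D"
    have "{b. b \<le> d} = insert d {b. b < d}" by auto
    then show "countable {b. b \<le> d}" using om unfolding is_omega1_def by simp
  qed
  moreover have "uncountable (UNIV::'i set)" using om unfolding is_omega1_def by simp
  ultimately obtain g where "g \<notin> (\<Union>d\<in>D. {b. b \<le> d})" by (metis UNIV_eq_I countable_subset subset_UNIV)
  then show ?thesis by (auto simp: not_le)
qed

lemma some_ub:
  assumes om: "is_omega1 TYPE('i::wellorder)" and c: "countable (D::'i set)" and d: "d \<in> D"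
  shows "d < (SOME y. \<forall>d\<in>D. d < y)"
proof -
  obtain g where "\<forall>d\<in>D. d < g" using om_bounded[OF om c] by blast
  then have "\<forall>d\<in>D. d < (SOME y. \<forall>d\<in>D. d < y)" by (rule someI)
  then show ?thesis using d by blast
qed

lemma om_countable_le:
  assumes om: "is_omega1 TYPE('i::wellorder)"
  shows "countable {b::'i. b \<le> a}"
proof -
  have "{b. b \<le> a} = insert a {b. b < a}" by auto
  then show ?thesis using om unfolding is_omega1_def by simp
qed

lemma closure_pt:
  fixes g :: "'i::wellorder \<Rightarrow> 'i"
  assumes om: "is_omega1 TYPE('i)"
  shows "\<exists>b. a0 < b \<and> (\<forall>a<b. g a < b)"
proof -
  define ub :: "'i set \<Rightarrow> 'i" where "ub D = (SOME y. \<forall>d\<in>D. d < y)" for D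
  have ub: "\<And>D d. countable D \<Longrightarrow> d \<in> D \<Longrightarrow> d < ub D"
    unfolding ub_def by (rule some_ub[OF om])
  define s where "s = rec_nat a0 (\<lambda>n x. ub (insert x (g ` {a. a \<le> x})))"
  have s0: "s 0 = a0" by (simp add: s_def)
  have sS: "s (Suc n) = ub (insert (s n) (g ` {a. a \<le> s n}))" for n by (simp add: s_def)
  have cnt: "countable (insert (s n) (g ` {a. a \<le> s n}))" for n
    using om_countable_le[OF om] by simp
  have inc: "s n < s (Suc n)" for n using ub[OF cnt] sS by simp
  have gl: "a \<le> s n \<Longrightarrow> g a < s (Suc n)" for a n using ub[OF cnt] sS by simp
  obtain c where c: "\<forall>n. s n < c" using om_bounded[OF om, of "range s"] by auto
  define b where "b = (LEAST b. \<forall>n. s n < b)"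
  have bb: "\<forall>n. s n < b" unfolding b_def by (rule LeastI[of _ c]) (use c in auto)
  have "g a < b" if "a < b" for a
  proof -
    have "\<not> (\<forall>n. s n < a)" using not_less_Least[of a "\<lambda>b. \<forall>n. s n < b"] that b_def by auto
    then obtain n where "a \<le> s n" by (auto simp: not_less)
    then have "g a < s (Suc n)" by (rule gl)
    then show ?thesis using bb by (meson order.strict_trans)
  qed
  then show ?thesis using bb s0 by metis
qed

lemma club_UNIV:
  assumes om: "is_omega1 TYPE('i::wellorder)"
  shows "club (UNIV::'i set)"
  unfolding club_def closed_set_def unbounded_def
  using closure_pt[OF om, of _ id] by auto

lemma stationary_nonempty:
  assumes om: "is_omega1 TYPE('i::wellorder)" and "stationary (S::'i set)"
  shows "S \<noteq> {}"
  using assms club_UNIV[OF om] unfolding stationary_def by auto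

lemma stationary_mono: "stationary S \<Longrightarrow> S \<subseteq> S' \<Longrightarrow> stationary S'"
  unfolding stationary_def by blast

lemma club_above:
  assumes "club (C::'i::wellorder set)"
  shows "club (C \<inter> {a. g < a})"
proof -
  have cl: "closed_set C" and ub: "unbounded C" using assms by (auto simp: club_def)
  have "closed_set (C \<inter> {a. g < a})"
    unfolding closed_set_def
  proof (intro allI impI)
    fix a assume h: "(\<exists>c\<in>C \<inter> {a. g < a}. c < a) \<and> (\<forall>b<a. \<exists>c\<in>C \<inter> {a. g < a}. b < c \<and> c < a)"
    then have "a \<in> C" using cl unfolding closed_set_def by blast
    moreover have "g < a" using h by auto
    ultimately show "a \<in> C \<inter> {a. g < a}" by simp
  qed
  moreover have "unbounded (C \<inter> {a. g < a})"
    unfolding unbounded_def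
  proof
    fix a
    obtain c where "c \<in> C" "max a g < c" using ub unfolding unbounded_def by blast
    then show "\<exists>c\<in>C \<inter> {a. g < a}. a < c" by auto
  qed
  ultimately show ?thesis by (simp add: club_def)
qed

lemma stationary_above:
  assumes "stationary S"
  shows "stationary (S \<inter> {a. g < a})"
  using assms club_above unfolding stationary_def by blast

lemma club_diag:
  fixes C :: "'i::wellorder \<Rightarrow> 'i set"
  assumes om: "is_omega1 TYPE('i)" and cl: "\<And>b. club (C b)"
  shows "club {a. \<forall>b<a. a \<in> C b}"
proof -
  have "closed_set {a. \<forall>b<a. a \<in> C b}"
    unfolding closed_set_def
  proof (intro allI impI)
    fix a assume h: "(\<exists>c\<in>{a. \<forall>b<a. a \<in> C b}. c < a) \<and> (\<forall>b<a. \<exists>c\<in>{a. \<forall>b<a. a \<in> C b}. b < c \<and> c < a)"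
    show "a \<in> {a. \<forall>b<a. a \<in> C b}"
    proof (clarify)
      fix b assume ba: "b < a"
      have "(\<exists>c\<in>C b. c < a) \<and> (\<forall>e<a. \<exists>c\<in>C b. e < c \<and> c < a)"
      proof (intro conjI allI impI)
        obtain c where "c \<in> {a. \<forall>b<a. a \<in> C b}" "b < c" "c < a" using h ba by blast
        then show "\<exists>c\<in>C b. c < a" by auto
      next
        fix e assume "e < a"
        then have "max e b < a" using ba by simp
        then obtain c where "c \<in> {a. \<forall>b<a. a \<in> C b}" "max e b < c" "c < a" using h by blast
        then show "\<exists>c\<in>C b. e < c \<and> c < a" by auto
      qed
      then show "a \<in> C b" using cl[of b] unfolding club_def closed_set_def by blast
    qed
  qed
  moreover have "unbounded {a. \<forall>b<a. a \<in> C b}"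
    unfolding unbounded_def
  proof
    fix a0
    define nxt where "nxt b a = (SOME c. c \<in> C b \<and> a < c)" for b a
    have nxt: "nxt b a \<in> C b \<and> a < nxt b a" for b a
      unfolding nxt_def by (rule someI_ex) (use cl[of b] in \<open>auto simp: club_def unbounded_def\<close>)
    define ub :: "'i set \<Rightarrow> 'i" where "ub D = (SOME y. \<forall>d\<in>D. d < y)" for D
    have ub: "\<And>D d. countable D \<Longrightarrow> d \<in> D \<Longrightarrow> d < ub D"
      unfolding ub_def by (rule some_ub[OF om])
    define g where "g a = ub ((\<lambda>b. nxt b a) ` {b. b \<le> a})" for a
    have g: "b \<le> a \<Longrightarrow> nxt b a < g a" for a b
      unfolding g_def using ub[of "(\<lambda>b. nxt b a) ` {b. b \<le> a}" "nxt b a"] om_countable_le[OF om, of a] by auto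
    obtain m where m: "a0 < m" "\<forall>a<m. g a < m" using closure_pt[OF om, of a0 g] by blast
    have "m \<in> C b" if bm: "b < m" for b
    proof -
      have "(\<exists>c\<in>C b. c < m) \<and> (\<forall>e<m. \<exists>c\<in>C b. e < c \<and> c < m)"
      proof (intro conjI allI impI)
        have "nxt b b < g b" using g[of b b] by simp
        also have "g b < m" using m(2) bm by simp
        finally show "\<exists>c\<in>C b. c < m" using nxt[of b b] by blast
      next
        fix e assume "e < m"
        then have em: "max e b < m" using bm by simp
        have "nxt b (max e b) < g (max e b)" using g by simp
        then have "nxt b (max e b) < m" using m(2)[rule_format, OF em] by (rule order.strict_trans)
        moreover have "e < nxt b (max e b)" using nxt[of b "max e b"] by simp
        ultimately show "\<exists>c\<in>C b. e < c \<and> c < m" using nxt by blast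
      qed
      then show ?thesis using cl[of b] unfolding club_def closed_set_def by blast
    qed
    then show "\<exists>c\<in>{a. \<forall>b<a. a \<in> C b}. a0 < c" using m(1) by blast
  qed
  ultimately show ?thesis by (simp add: club_def)
qed

lemma fodor:
  fixes f :: "'i::wellorder \<Rightarrow> 'i"
  assumes om: "is_omega1 TYPE('i)" and st: "stationary S" and reg: "\<forall>a\<in>S. f a < a"
  shows "\<exists>b. stationary {a\<in>S. f a = b}"
proof (rule ccontr)
  assume "\<not> ?thesis"
  then have "\<forall>b. \<exists>C. club C \<and> {a\<in>S. f a = b} \<inter> C = {}" unfolding stationary_def by blast
  then obtain C where C: "\<And>b. club (C b) \<and> {a\<in>S. f a = b} \<inter> C b = {}" by metis
  have "club {a. \<forall>b<a. a \<in> C b}" using club_diag[OF om] C by blast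
  then obtain a where a: "a \<in> S" "\<forall>b<a. a \<in> C b" using st unfolding stationary_def by blast
  then have "a \<in> C (f a)" using reg by blast
  then show False using C[of "f a"] a by blast
qed

lemma pigeon:
  fixes f :: "'i::wellorder \<Rightarrow> 'k"
  assumes om: "is_omega1 TYPE('i)" and st: "stationary S" and K: "countable K" and fS: "f ` S \<subseteq> K"
  shows "\<exists>k. stationary {a\<in>S. f a = k}"
proof -
  obtain e :: "'k \<Rightarrow> nat" where e: "inj_on e K" using K unfolding countable_def by blast
  have "infinite (UNIV::'i set)" using om unfolding is_omega1_def using countable_finite by blast
  then obtain d :: "nat \<Rightarrow> 'i" where d: "inj d" using infinite_countable_subset by blast
  define h where "h = d \<circ> e"
  have hi: "inj_on h K" unfolding h_def using e d by (simp add: comp_inj_on inj_on_subset)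
  have "countable (h ` K)" using K by simp
  then obtain g where g: "\<forall>y\<in>h ` K. y < g" using om_bounded[OF om] by blast
  have st': "stationary (S \<inter> {a. g < a})" using stationary_above[OF st] .
  have "\<forall>a\<in>S \<inter> {a. g < a}. h (f a) < a" using g fS by force
  then obtain b where b: "stationary {a\<in>S \<inter> {a. g < a}. h (f a) = b}" using fodor[OF om st', of "\<lambda>a. h (f a)"] by blast
  then obtain a0 where a0: "a0 \<in> {a\<in>S \<inter> {a. g < a}. h (f a) = b}" using stationary_nonempty[OF om] by blast
  have "{a\<in>S \<inter> {a. g < a}. h (f a) = b} \<subseteq> {a\<in>S. f a = f a0}"
    using a0 hi fS by (auto dest: inj_onD)
  then show ?thesis using b stationary_mono by blast
qed



definition le_t :: "('t \<Rightarrow> 't \<Rightarrow> bool) \<Rightarrow> 't \<Rightarrow> 't \<Rightarrow> bool" where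
  "le_t lt p w \<longleftrightarrow> p = w \<or> lt p w"

definition proj :: "'t set \<Rightarrow> ('t \<Rightarrow> 't \<Rightarrow> bool) \<Rightarrow> ('t \<Rightarrow> 'i::wellorder) \<Rightarrow> 't \<Rightarrow> 'i \<Rightarrow> 't" where
  "proj T lt ht t c = (if c < ht t then inv_into {s\<in>T. lt s t} ht c else t)"

context
  fixes T :: "'t set" and lt :: "'t \<Rightarrow> 't \<Rightarrow> bool" and ht :: "'t \<Rightarrow> 'i::wellorder"
  assumes tr: "tree_with_height T lt ht"
begin

lemma tr_irr: "t \<in> T \<Longrightarrow> \<not> lt t t"
  using tr unfolding tree_with_height_def by blast

lemma tr_trans: "s \<in> T \<Longrightarrow> t \<in> T \<Longrightarrow> u \<in> T \<Longrightarrow> lt s t \<Longrightarrow> lt t u \<Longrightarrow> lt s u"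
  using tr unfolding tree_with_height_def by blast

lemma tr_bij: "t \<in> T \<Longrightarrow> bij_betw ht {s\<in>T. lt s t} {b. b < ht t}"
  using tr unfolding tree_with_height_def by blast

lemma tr_iso: "t \<in> T \<Longrightarrow> s \<in> T \<Longrightarrow> s' \<in> T \<Longrightarrow> lt s t \<Longrightarrow> lt s' t \<Longrightarrow> lt s s' \<longleftrightarrow> ht s < ht s'"
  using tr unfolding tree_with_height_def by blast

lemma tr_ht: "s \<in> T \<Longrightarrow> t \<in> T \<Longrightarrow> lt s t \<Longrightarrow> ht s < ht t"
  using tr_bij[of t] unfolding bij_betw_def by blast

lemma le_t_trans: "s \<in> T \<Longrightarrow> t \<in> T \<Longrightarrow> u \<in> T \<Longrightarrow> le_t lt s t \<Longrightarrow> le_t lt t u \<Longrightarrow> le_t lt s u"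
  unfolding le_t_def using tr_trans by blast

lemma le_t_ht: "s \<in> T \<Longrightarrow> t \<in> T \<Longrightarrow> le_t lt s t \<Longrightarrow> ht s \<le> ht t"
  unfolding le_t_def using tr_ht by fastforce

lemma proj_props:
  assumes t: "t \<in> T" and c: "c \<le> ht t"
  shows "proj T lt ht t c \<in> T \<and> ht (proj T lt ht t c) = c \<and> le_t lt (proj T lt ht t c) t"
proof (cases "c < ht t")
  case True
  have b: "bij_betw ht {s\<in>T. lt s t} {b. b < ht t}" using tr_bij[OF t] .
  have cim: "c \<in> ht ` {s\<in>T. lt s t}" using b True by (simp add: bij_betw_def)
  have "inv_into {s\<in>T. lt s t} ht c \<in> {s\<in>T. lt s t}"
    using cim by (rule inv_into_into)
  moreover have "ht (inv_into {s\<in>T. lt s t} ht c) = c"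
    using cim by (rule f_inv_into_f)
  ultimately show ?thesis using True by (simp add: proj_def le_t_def)
next
  case False
  then show ?thesis using c t by (simp add: proj_def le_t_def)
qed

lemma proj_unique:
  assumes t: "t \<in> T" and s: "s \<in> T" and st: "le_t lt s t"
  shows "proj T lt ht t (ht s) = s"
proof (cases "s = t")
  case True
  then show ?thesis by (simp add: proj_def)
next
  case False
  then have lst: "lt s t" using st by (simp add: le_t_def)
  then have hl: "ht s < ht t" using tr_ht s t by blast
  have b: "bij_betw ht {s\<in>T. lt s t} {b. b < ht t}" using tr_bij[OF t] .
  have "inv_into {s\<in>T. lt s t} ht (ht s) = s"
    using b lst s by (simp add: bij_betw_def)
  then show ?thesis using hl by (simp add: proj_def)
qed

lemma key:
  assumes p: "p \<in> T" and q: "q \<in> T" and w: "w \<in> T" and pw: "le_t lt p w" and qw: "le_t lt q w"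
    and h: "ht p < ht q"
  shows "lt p q"
proof -
  have "ht q \<le> ht w" using le_t_ht q w qw by blast
  then have "p \<noteq> w" using h by auto
  then have lpw: "lt p w" using pw by (simp add: le_t_def)
  show ?thesis
  proof (cases "q = w")
    case True then show ?thesis using lpw by simp
  next
    case False
    then have "lt q w" using qw by (simp add: le_t_def)
    then show ?thesis using tr_iso[OF w p q lpw] h by simp
  qed
qed

lemma proj_comp:
  assumes s: "s \<in> T" and t: "t \<in> T" and st: "le_t lt s t" and c: "c \<le> ht s"
  shows "proj T lt ht s c = proj T lt ht t c"
proof -
  have P: "proj T lt ht s c \<in> T" "ht (proj T lt ht s c) = c" "le_t lt (proj T lt ht s c) s"
    using proj_props[OF s c] by auto
  then have "le_t lt (proj T lt ht s c) t" using le_t_trans s t st by blast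
  then have "proj T lt ht t (ht (proj T lt ht s c)) = proj T lt ht s c"
    using proj_unique[OF t P(1)] by blast
  then show ?thesis using P(2) by simp
qed

end


theorem lemma4:
  fixes T :: "'t set" and lt :: "'t \<Rightarrow> 't \<Rightarrow> bool" and ht :: "'t \<Rightarrow> 'i::wellorder"
    and E :: "'i set" and x :: "'i \<Rightarrow> 't set"
  assumes "is_omega1 TYPE('i)"
    and "stationary E"
    and "aronszajn T lt ht"
    and "SS_tree T lt ht"
    and "\<forall>a\<in>E. finite (x a) \<and> antichain_in T lt (x a)"
  shows "\<exists>E'\<subseteq>E. stationary E' \<and> antichain_in T lt (\<Union>a\<in>E'. x a)"
proof -
  note om = assms(1)
  have tr: "tree_with_height T lt ht" using assms(3) by (simp add: aronszajn_def)
  have lev: "\<And>c. countable {t\<in>T. ht t = c}" using assms(3) by (simp add: aronszajn_def)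
  have xfin: "\<And>a. a \<in> E \<Longrightarrow> finite (x a)" using assms(5) by blast
  have xT: "\<And>a. a \<in> E \<Longrightarrow> x a \<subseteq> T" using assms(5) by (simp add: antichain_in_def)
  have xac: "\<And>a s t. a \<in> E \<Longrightarrow> s \<in> x a \<Longrightarrow> t \<in> x a \<Longrightarrow> s \<noteq> t \<Longrightarrow> \<not> lt s t"
    using assms(5) by (simp add: antichain_in_def)
  note proj_props = proj_props[OF tr] and proj_unique = proj_unique[OF tr]
    and key = key[OF tr] and proj_comp = proj_comp[OF tr] and le_t_trans = le_t_trans[OF tr]
  let ?pr = "proj T lt ht"
  define L where "L a = {t\<in>x a. ht t < a}" for a
  define g0 :: 'i where "g0 = undefined"
  define S0 where "S0 = E \<inter> {a. g0 < a}"
  have stS0: "stationary S0" unfolding S0_def by (rule stationary_above[OF assms(2)])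
  define phi where "phi a = (if L a = {} then g0 else Max (ht ` L a))" for a
  have "\<forall>a\<in>S0. phi a < a"
  proof
    fix a assume a: "a \<in> S0"
    show "phi a < a"
    proof (cases "L a = {}")
      case True then show ?thesis using a by (simp add: phi_def S0_def)
    next
      case False
      have "finite (L a)" using xfin a by (simp add: L_def S0_def)
      then have "Max (ht ` L a) < a" using False by (simp add: Max_less_iff L_def)
      then show ?thesis using False by (simp add: phi_def)
    qed
  qed
  then obtain m where stE0: "stationary {a\<in>S0. phi a = m}" using fodor[OF om stS0] by blast
  define E0 where "E0 = {a\<in>S0. phi a = m}"
  define M where "M = {t\<in>T. ht t \<le> m}"
  have "M = (\<Union>c\<in>{c. c \<le> m}. {t\<in>T. ht t = c})" unfolding M_def by auto
  then have cM: "countable M" using om_countable_le[OF om] lev by simp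
  have "L ` E0 \<subseteq> {A. finite A \<and> A \<subseteq> M}"
  proof (rule image_subsetI)
    fix a assume a: "a \<in> E0"
    have fin: "finite (L a)" using xfin a by (simp add: L_def E0_def S0_def)
    have "t \<in> M" if t: "t \<in> L a" for t
    proof -
      from t have "L a \<noteq> {}" by auto
      then have "phi a = Max (ht ` L a)" by (simp add: phi_def)
      moreover have "ht t \<le> Max (ht ` L a)" using t fin by (simp add: Max_ge)
      ultimately have "ht t \<le> m" using a by (simp add: E0_def)
      moreover have "t \<in> T" using t a xT by (auto simp: L_def E0_def S0_def)
      ultimately show "t \<in> M" by (simp add: M_def)
    qed
    then show "L a \<in> {A. finite A \<and> A \<subseteq> M}" using fin by auto
  qed
  then obtain F where stE1: "stationary {a\<in>E0. L a = F}"
    using pigeon[OF om stE0[folded E0_def] countable_Collect_finite_subset[OF cM]] by blast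
  define E1 where "E1 = {a\<in>E0. L a = F}"
  have E1E: "E1 \<subseteq> E" "E1 \<subseteq> S0" by (auto simp: E1_def E0_def S0_def)
  define H where "H a = {t\<in>x a. a \<le> ht t}" for a
  define P where "P a = (\<lambda>t. ?pr t a) ` H a" for a
  have Pfin: "finite (P a)" if "a \<in> E" for a using xfin[OF that] by (simp add: P_def H_def)
  have Plev: "p \<in> T \<and> ht p = a" if "a \<in> E" "p \<in> P a" for a p
    using that xT proj_props by (auto simp: P_def H_def)
  obtain n where stE2: "stationary {a\<in>E1. card (P a) = n}"
    using pigeon[where f="\<lambda>a. card (P a)" and K=UNIV, OF om stE1[folded E1_def]] by auto
  define E2 where "E2 = {a\<in>E1. card (P a) = n}"
  have E2E: "E2 \<subseteq> E" "E2 \<subseteq> S0" using E1E by (auto simp: E2_def)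
  define p where "p a = (SOME h. bij_betw h {0..<n} (P a))" for a
  have pb: "bij_betw (p a) {0..<n} (P a)" if "a \<in> E2" for a
  proof -
    have "\<exists>h. bij_betw h {0..<n} (P a)"
      using ex_bij_betw_nat_finite[OF Pfin] that E2E by (auto simp: E2_def)
    then show ?thesis unfolding p_def by (rule someI_ex)
  qed
  have Pp: "P a = p a ` {0..<n}" if "a \<in> E2" for a using pb[OF that] by (simp add: bij_betw_def)
  have pT: "p a i \<in> T" "ht (p a i) = a" if "a \<in> E2" "i < n" for a i
    using Plev[of a "p a i"] Pp[OF that(1)] that E2E by auto
  \<comment> \<open>Step 3: a uniform splitting level\<close>
  define sep where "sep a i j c \<longleftrightarrow> ?pr (p a i) c \<noteq> ?pr (p a j) c" for a i j c
  define lst where "lst a i j = (LEAST c. c < a \<and> sep a i j c)" for a i j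
  define W where "W a = {lst a i j | i j. i < n \<and> j < n \<and> (\<exists>c<a. sep a i j c)}" for a
  have Wfin: "finite (W a)" for a
  proof -
    have "W a \<subseteq> (\<lambda>(i,j). lst a i j) ` ({..<n} \<times> {..<n})" unfolding W_def by auto
    then show ?thesis by (rule finite_subset) simp
  qed
  have lstP: "lst a i j < a \<and> sep a i j (lst a i j)" if "\<exists>c<a. sep a i j c" for a i j
    unfolding lst_def by (rule LeastI_ex) (use that in blast)
  define dl where "dl a = (if W a = {} then g0 else Max (W a))" for a
  have dlt: "dl a < a" if "a \<in> E2" for a
  proof (cases "W a = {}")
    case True then show ?thesis using that E2E by (auto simp: dl_def S0_def)
  next
    case False
    have "\<forall>c\<in>W a. c < a" unfolding W_def using lstP by blast
    then show ?thesis using False Wfin by (simp add: dl_def Max_less_iff)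
  qed
  have persist: "sep a i j c1" if "a \<in> E2" "i < n" "j < n" "c0 \<le> c1" "c1 \<le> a" "sep a i j c0" for a i j c0 c1
  proof (rule ccontr)
    assume "\<not> sep a i j c1"
    then have eq: "?pr (p a i) c1 = ?pr (p a j) c1" by (simp add: sep_def)
    have A: "?pr (?pr (p a i) c1) c0 = ?pr (p a i) c0"
      using proj_props[of "p a i" c1] proj_comp[of "?pr (p a i) c1" "p a i" c0] pT[of a i] that by auto
    have B: "?pr (?pr (p a j) c1) c0 = ?pr (p a j) c0"
      using proj_props[of "p a j" c1] proj_comp[of "?pr (p a j) c1" "p a j" c0] pT[of a j] that by auto
    show False using A B eq that(6) by (simp add: sep_def)
  qed
  have dsep: "sep a i j (dl a)" if "a \<in> E2" "i < n" "j < n" "\<exists>c<a. sep a i j c" for a i j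
  proof -
    have l: "lst a i j \<in> W a" using that unfolding W_def by blast
    then have "lst a i j \<le> dl a" using Wfin by (auto simp: dl_def)
    then show ?thesis using persist[OF that(1-3), of "lst a i j" "dl a"] dlt[OF that(1)] lstP[OF that(4)] by simp
  qed
  obtain d where stE3': "stationary {a\<in>E2. dl a = d}"
    using fodor[OF om stE2[folded E2_def], of dl] dlt by blast
  define E3' where "E3' = {a\<in>E2. dl a = d}"
  define qf where "qf a = map (\<lambda>i. ?pr (p a i) d) [0..<n]" for a
  have "qf ` E3' \<subseteq> lists {t\<in>T. ht t = d}"
  proof (rule image_subsetI)
    fix a assume a: "a \<in> E3'"
    then have "d < a" "a \<in> E2" using dlt by (auto simp: E3'_def)
    then show "qf a \<in> lists {t\<in>T. ht t = d}"
      using proj_props pT by (auto simp: qf_def)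
  qed
  then obtain qs where stE3: "stationary {a\<in>E3'. qf a = qs}"
    using pigeon[OF om stE3'[folded E3'_def] countable_lists[OF lev]] by blast
  define E3 where "E3 = {a\<in>E3'. qf a = qs}"
  have E3E: "E3 \<subseteq> E2" by (auto simp: E3_def E3'_def)
  have dE3: "dl a = d" "d < a" if "a \<in> E3" for a using that dlt by (auto simp: E3_def E3'_def)
  have qsi: "?pr (p a i) d = qs ! i" if "a \<in> E3" "i < n" for a i
  proof -
    have "qs = qf a" using that by (simp add: E3_def)
    then show ?thesis using that(2) by (simp add: qf_def)
  qed
  have diag: "\<exists>E'\<subseteq>E3. stationary E' \<and> (\<forall>i<k. \<forall>a\<in>E'. \<forall>b\<in>E'. \<not> lt (p a i) (p b i))" if "k \<le> n" for k
    using that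
  proof (induction k)
    case 0
    have "stationary E3" using stE3 by (simp add: E3_def)
    then show ?case by blast
  next
    case (Suc k)
    have "k \<le> n" using Suc.prems by simp
    then obtain E' where E': "E' \<subseteq> E3" "stationary E'" "\<forall>i<k. \<forall>a\<in>E'. \<forall>b\<in>E'. \<not> lt (p a i) (p b i)"
      using Suc.IH by blast
    have kn: "k < n" using Suc by simp
    define X where "X = (\<lambda>a. p a k) ` E'"
    have e: "p a k \<in> T" "ht (p a k) = a" if "a \<in> E'" for a
      using pT[OF _ kn, of a] that E'(1) E3E by auto
    have XT: "X \<subseteq> T" using e by (auto simp: X_def)
    have "ht ` X = (\<lambda>a. ht (p a k)) ` E'" by (simp add: X_def image_image)
    also have "\<dots> = (\<lambda>a. a) ` E'" by (rule image_cong) (simp_all add: e)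
    finally have htX: "ht ` X = E'" by simp
    have "stationary_in_tree ht X" using E'(2) htX by (simp add: stationary_in_tree_def)
    then obtain A where A: "A \<subseteq> X" "antichain_in T lt A" "stationary_in_tree ht A"
      using assms(4) XT unfolding SS_tree_def by blast
    define E'' where "E'' = ht ` A"
    have inA: "p a k \<in> A" if aE'': "a \<in> E''" for a
    proof -
      obtain u where u: "u \<in> A" "ht u = a" using aE'' unfolding E''_def by blast
      then obtain a' where a': "a' \<in> E'" "u = p a' k" using A(1) by (auto simp: X_def)
      then have "ht u = a'" using e by simp
      then show ?thesis using u a' by simp
    qed
    have E''E': "E'' \<subseteq> E'" using A(1) htX by (auto simp: E''_def)
    have "\<forall>i<Suc k. \<forall>a\<in>E''. \<forall>b\<in>E''. \<not> lt (p a i) (p b i)"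
    proof (intro allI impI ballI)
      fix i a b assume i: "i < Suc k" and a: "a \<in> E''" and b: "b \<in> E''"
      show "\<not> lt (p a i) (p b i)"
      proof (cases "i < k")
        case True
        have "a \<in> E'" "b \<in> E'" using a b E''E' by blast+
        then show ?thesis using E'(3) True by blast
      next
        case False
        then have ik: "i = k" using i by simp
        show ?thesis
        proof (cases "a = b")
          case True
          have "a \<in> E'" using a E''E' by blast
          then have "p a k \<in> T" using e by simp
          then show ?thesis using tr_irr[OF tr] True ik by simp
        next
          case False
          have "a \<in> E'" "b \<in> E'" using a b E''E' by blast+
          then have "p a k \<noteq> p b k" using e False by metis
          then show ?thesis using A(2) inA[OF a] inA[OF b] ik by (simp add: antichain_in_def)
        qed
      qed
    qed
    then have F3: "\<forall>i<Suc k. \<forall>a\<in>E''. \<forall>b\<in>E''. \<not> lt (p a i) (p b i)" .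
    have F2: "stationary E''" using A(3) by (simp add: E''_def stationary_in_tree_def)
    have F1: "E'' \<subseteq> E3" using E''E' E'(1) by (rule subset_trans)
    show ?case by (rule exI[of _ E'']) (intro conjI F1 F2 F3)
  qed
  from diag[OF order_refl[of n]] obtain E' where
    E'all: "E' \<subseteq> E3 \<and> stationary E' \<and> (\<forall>i<n. \<forall>a\<in>E'. \<forall>b\<in>E'. \<not> lt (p a i) (p b i))"
    by (elim exE)
  have E'_1: "E' \<subseteq> E3" using E'all by (rule conjunct1)
  have E'_2: "stationary E'" using E'all by (rule conjunct1[OF conjunct2])
  have E'_3: "\<forall>i<n. \<forall>a\<in>E'. \<forall>b\<in>E'. \<not> lt (p a i) (p b i)" using E'all by (rule conjunct2[OF conjunct2])
  note E' = E'_1 E'_2 E'_3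
  have E'2: "a \<in> E2" if "a \<in> E'" for a using that E'(1) E3E by auto
  have cross: "\<not> lt (p a i) (p b j)" if ab: "a \<in> E'" "b \<in> E'" "a < b" "i < n" "j < n" for a b i j
  proof
    assume l: "lt (p a i) (p b j)"
    have a3: "a \<in> E3" using ab(1) E'(1) by blast
    have b3: "b \<in> E3" using ab(2) E'(1) by blast
    have a2: "a \<in> E2" using a3 E3E by blast
    have b2: "b \<in> E2" using b3 E3E by blast
    have pa: "p a i \<in> T" "ht (p a i) = a" using pT[OF a2 ab(4)] by auto
    have pbj: "p b j \<in> T" "ht (p b j) = b" using pT[OF b2 ab(5)] by auto
    have pbi: "p b i \<in> T" "ht (p b i) = b" using pT[OF b2 ab(4)] by auto
    have lta: "le_t lt (p a i) (p b j)" using l by (simp add: le_t_def)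
    have dA: "d < a" using dE3[OF a3] by simp
    then have "d \<le> ht (p a i)" using pa(2) by simp
    then have "?pr (p a i) d = ?pr (p b j) d"
      by (rule proj_comp[OF pa(1) pbj(1) lta])
    moreover have "?pr (p a i) d = qs ! i" by (rule qsi[OF a3 ab(4)])
    moreover have "?pr (p b j) d = qs ! j" by (rule qsi[OF b3 ab(5)])
    moreover have "?pr (p b i) d = qs ! i" by (rule qsi[OF b3 ab(4)])
    ultimately have "?pr (p b i) d = ?pr (p b j) d" by simp
    then have "\<not> sep b i j (dl b)" using dE3(1)[OF b3] by (simp add: sep_def)
    then have "\<not> (\<exists>c<b. sep b i j c)" using dsep[OF b2 ab(4) ab(5)] by blast
    then have "\<not> sep b i j a" using ab(3) by blast
    then have e1: "?pr (p b i) a = ?pr (p b j) a" unfolding sep_def by (rule notnotD)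
    have e2: "?pr (p b j) (ht (p a i)) = p a i" by (rule proj_unique[OF pbj(1) pa(1) lta])
    have r: "?pr (p b i) a = p a i" using e1 e2 unfolding pa(2) by (rule trans)
    have "a \<le> ht (p b i)" using pbi(2) ab(3) by simp
    then have "le_t lt (?pr (p b i) a) (p b i)" using proj_props[OF pbi(1)] by blast
    then have "le_t lt (p a i) (p b i)" unfolding r .
    moreover have "p a i \<noteq> p b i"
    proof
      assume "p a i = p b i"
      then have "ht (p a i) = ht (p b i)" by simp
      then show False using pa(2) pbi(2) ab(3) by simp
    qed
    ultimately have "lt (p a i) (p b i)" unfolding le_t_def by blast
    moreover have "\<not> lt (p a i) (p b i)" using E'(3) ab(1,2,4) by blast
    ultimately show False by simp
  qed
  have E'E: "E' \<subseteq> E" using E'2 E2E by auto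
  have LF: "L a = F" if "a \<in> E'" for a using E'2[OF that] by (simp add: E2_def E1_def)
  have noLt: "\<not> lt s t" if st: "a \<in> E'" "b \<in> E'" "s \<in> x a" "t \<in> x b" "s \<noteq> t" for a b s t
  proof
    assume l: "lt s t"
    have aE: "a \<in> E" and bE: "b \<in> E" using st E'E by auto
    have sT: "s \<in> T" and tT: "t \<in> T" using xT aE bE st by auto
    show False
    proof (cases "ht s < a")
      case True
      then have "s \<in> L a" using st by (simp add: L_def)
      then have "s \<in> x b" using LF st by (auto simp: L_def)
      then show False using xac[OF bE _ st(4) st(5)] l by blast
    next
      case hs: False
      show False
      proof (cases "ht t < b")
        case True
        then have "t \<in> L b" using st by (simp add: L_def)
        then have "t \<in> x a" using LF st by (auto simp: L_def)
        then show False using xac[OF aE st(3) _ st(5)] l by blast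
      next
        case ht: False
        show False
        proof (cases "a = b")
          case True then show False using xac[OF aE st(3)] st l by blast
        next
          case False
          have sH: "s \<in> H a" and tH: "t \<in> H b" using hs ht st by (auto simp: H_def)
          have psP: "?pr s a \<in> P a" and ptP: "?pr t b \<in> P b" using sH tH by (auto simp: P_def)
          obtain i where i: "i < n" "?pr s a = p a i" using psP Pp[OF E'2[OF st(1)]] by auto
          obtain j where j: "j < n" "?pr t b = p b j" using ptP Pp[OF E'2[OF st(2)]] by auto
          have ps: "?pr s a \<in> T" "ht (?pr s a) = a" "le_t lt (?pr s a) s"
            using proj_props[OF sT] hs by auto
          have pt: "?pr t b \<in> T" "ht (?pr t b) = b" "le_t lt (?pr t b) t"
            using proj_props[OF tT] ht by auto
          have pst: "le_t lt (?pr s a) t" using le_t_trans[OF ps(1) sT tT ps(3)] l by (simp add: le_t_def)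
          show False
          proof (cases "a < b")
            case True
            then have "lt (?pr s a) (?pr t b)" using key[OF ps(1) pt(1) tT pst pt(3)] ps pt by simp
            then show False using cross[OF st(1) st(2) True i(1) j(1)] i j by simp
          next
            case False
            then have "b < a" using \<open>a \<noteq> b\<close> by simp
            then have "lt (?pr t b) (?pr s a)" using key[OF pt(1) ps(1) tT pt(3) pst] ps pt by simp
            then show False using cross[OF st(2) st(1) \<open>b < a\<close> j(1) i(1)] i j by simp
          qed
        qed
      qed
    qed
  qed
  have "antichain_in T lt (\<Union>a\<in>E'. x a)"
    unfolding antichain_in_def
  proof (rule conjI)
    show "(\<Union>a\<in>E'. x a) \<subseteq> T" using xT E'E by blast
  next
    show "\<forall>s\<in>(\<Union>a\<in>E'. x a). \<forall>t\<in>(\<Union>a\<in>E'. x a). s \<noteq> t \<longrightarrow> \<not> lt s t \<and> \<not> lt t s"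
    proof (intro ballI impI)
      fix s t assume s: "s \<in> (\<Union>a\<in>E'. x a)" and t: "t \<in> (\<Union>a\<in>E'. x a)" and ne: "s \<noteq> t"
      then obtain a b where "a \<in> E'" "b \<in> E'" "s \<in> x a" "t \<in> x b" by blast
      then show "\<not> lt s t \<and> \<not> lt t s" using noLt[of a b s t] noLt[of b a t s] ne by simp
    qed
  qed
  then show ?thesis using E'E E'(2) by blast
qed

end
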